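(* Let $K$ be a field of characteristic $0$, $\eta\in K\setminus\{0\}$ not a root of unity, $A=A_\eta=A(1+\eta,-\eta,1)$, $\epsilon=(\eta-1)^{-1}$ and $w=-ud+du+\epsilon$. Let $N=A/A(d-1)$ and for $a\in A$ write $\bar a$ for its image in $N$. Then every nonzero submodule $U$ of $N$ contains $\overline{w^m}$ for some integer $m\ge0$.
   Context: The down-up algebra $A(\alpha,\beta,\gamma)$ is the $K$-algebra generated by $d,u$ with relations $d^2u=\alpha dud+\beta ud^2+\gamma d$ and $du^2=\alpha udu+\beta u^2d+\gamma u$. In $A_\eta$, $w$ is normal with $dw=\eta wd$, $uw=\eta^{-1}wu$. *)

theory Defs
  imports Main "HOL-Library.Poly_Mapping"
begin

datatype letter = LD | LU

typedef word = "UNIV :: letter list set" by simp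

setup_lifting type_definition_word

instantiation word :: monoid_add
begin
lift_definition zero_word :: word is "[]" .
lift_definition plus_word :: "word \<Rightarrow> word \<Rightarrow> word" is "(@)" .
instance by standard (transfer, simp)+
end

text \<open>The free associative K-algebra on two generators; multiplication is
 concatenation of words (convolution).\<close>
type_synonym 'k free2 = "word \<Rightarrow>\<^sub>0 'k"

definition scal :: "'k::ring_1 \<Rightarrow> 'k free2" where
  "scal c = Poly_Mapping.single 0 c"

definition gen_d :: "'k::ring_1 free2" where
  "gen_d = Poly_Mapping.single (Abs_word [LD]) 1"

definition gen_u :: "'k::ring_1 free2" where
  "gen_u = Poly_Mapping.single (Abs_word [LU]) 1"

definition two_sided_ideal :: "'a::ring_1 set \<Rightarrow> bool" where
  "two_sided_ideal I \<longleftrightarrow> 0 \<in> I \<and> (\<forall>x\<in>I. \<forall>y\<in>I. x + y \<in> I)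
     \<and> (\<forall>x\<in>I. \<forall>a b. a * x * b \<in> I)"

definition left_ideal :: "'a::ring_1 set \<Rightarrow> bool" where
  "left_ideal L \<longleftrightarrow> 0 \<in> L \<and> (\<forall>x\<in>L. \<forall>y\<in>L. x + y \<in> L) \<and> (\<forall>x\<in>L. \<forall>a. a * x \<in> L)"

definition downup_rels :: "'k::ring_1 \<Rightarrow> 'k \<Rightarrow> 'k \<Rightarrow> 'k free2 set" where
  "downup_rels \<alpha> \<beta> \<gamma> =
    {gen_d * gen_d * gen_u - scal \<alpha> * (gen_d * gen_u * gen_d)
       - scal \<beta> * (gen_u * gen_d * gen_d) - scal \<gamma> * gen_d,
     gen_d * gen_u * gen_u - scal \<alpha> * (gen_u * gen_d * gen_u)
       - scal \<beta> * (gen_u * gen_u * gen_d) - scal \<gamma> * gen_u}"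

definition downup_ideal :: "'k::ring_1 \<Rightarrow> 'k \<Rightarrow> 'k \<Rightarrow> 'k free2 set" where
  "downup_ideal \<alpha> \<beta> \<gamma> = \<Inter>{I. two_sided_ideal I \<and> downup_rels \<alpha> \<beta> \<gamma> \<subseteq> I}"

text \<open>Preimage in the free algebra of the left ideal A(d-1) of A:
  the kernel of the map free algebra -> N = A / A(d-1).\<close>
definition N_kernel :: "'k::ring_1 \<Rightarrow> 'k \<Rightarrow> 'k \<Rightarrow> 'k free2 set" where
  "N_kernel \<alpha> \<beta> \<gamma> = {i + a * (gen_d - 1) | i a. i \<in> downup_ideal \<alpha> \<beta> \<gamma>}"

end

theory Submission imports Defs begin

lemma scal_add: "scal (a + b) = scal a + (scal b :: 'k::ring_1 free2)"
  by (simp add: scal_def single_add)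
lemma scal_diff: "scal (a - b) = scal a - (scal b :: 'k::ring_1 free2)"
  by (simp add: scal_def single_diff)
lemma scal_minus: "scal (- a) = - (scal a :: 'k::ring_1 free2)"
  by (simp add: scal_def single_uminus)
lemma scal_1[simp]: "scal 1 = (1 :: 'k::ring_1 free2)"
  by (simp add: scal_def)
lemma scal_0[simp]: "scal 0 = (0 :: 'k::ring_1 free2)"
  by (simp add: scal_def)
lemma scal_mult: "scal a * scal b = (scal (a * b) :: 'k::ring_1 free2)"
  by (simp add: scal_def mult_single)
lemma scal_of_nat: "scal (of_nat n) = (of_nat n :: 'k::ring_1 free2)"
  by (simp add: scal_def)

lemma update_eq_add: "a \<notin> Poly_Mapping.keys f \<Longrightarrow> Poly_Mapping.update a b f = f + Poly_Mapping.single a b"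
  by (rule poly_mapping_eqI) (auto simp: lookup_update lookup_add lookup_single in_keys_iff when_def)

lemma scal_comm: "x * scal c = scal c * (x :: 'k::comm_ring_1 free2)"
proof (induction x rule: update_induct)
  case const then show ?case by simp
next
  case (update f a b)
  have "Poly_Mapping.single a b * scal c = scal c * Poly_Mapping.single a b"
    by (simp add: scal_def mult_single mult.commute)
  then show ?case using update by (simp add: update_eq_add distrib_left distrib_right)
qed

lemma scal_comm2: "x * (scal c * y) = scal c * (x * (y :: 'k::comm_ring_1 free2))"
  by (metis mult.assoc scal_comm)

lemma scal_mult2: "scal a * (scal b * x) = (scal (a * b) * x :: 'k::ring_1 free2)"
  by (metis mult.assoc scal_mult)

lemma tsi_downup: "two_sided_ideal (downup_ideal a b g)"
  unfolding two_sided_ideal_def downup_ideal_def by auto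

lemma rels_in: "downup_rels a b g \<subseteq> downup_ideal a b g"
  unfolding downup_ideal_def by auto

lemma tsi_mult: "two_sided_ideal I \<Longrightarrow> x \<in> I \<Longrightarrow> a * x * b \<in> I"
  unfolding two_sided_ideal_def by blast
lemma tsi_lmult: "two_sided_ideal I \<Longrightarrow> x \<in> I \<Longrightarrow> a * x \<in> I"
  using tsi_mult[of I x a 1] by simp
lemma tsi_rmult: "two_sided_ideal I \<Longrightarrow> x \<in> I \<Longrightarrow> x * b \<in> I"
  using tsi_mult[of I x 1 b] by simp
lemma tsi_add: "two_sided_ideal I \<Longrightarrow> x \<in> I \<Longrightarrow> y \<in> I \<Longrightarrow> x + y \<in> I"
  unfolding two_sided_ideal_def by blast
lemma tsi_0: "two_sided_ideal I \<Longrightarrow> 0 \<in> I"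
  unfolding two_sided_ideal_def by blast
lemma tsi_uminus: "two_sided_ideal I \<Longrightarrow> x \<in> I \<Longrightarrow> - x \<in> I"
  using tsi_lmult[of I x "-1"] by simp
lemma tsi_diff: "two_sided_ideal I \<Longrightarrow> x \<in> I \<Longrightarrow> y \<in> I \<Longrightarrow> x - y \<in> I"
  using tsi_add[of I x "-y"] tsi_uminus[of I y] by simp

lemma li_add: "left_ideal I \<Longrightarrow> x \<in> I \<Longrightarrow> y \<in> I \<Longrightarrow> x + y \<in> I"
  unfolding left_ideal_def by blast
lemma li_lmult: "left_ideal I \<Longrightarrow> x \<in> I \<Longrightarrow> a * x \<in> I"
  unfolding left_ideal_def by blast
lemma li_0: "left_ideal I \<Longrightarrow> 0 \<in> I"
  unfolding left_ideal_def by blast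
lemma li_diff: "left_ideal I \<Longrightarrow> x \<in> I \<Longrightarrow> y \<in> I \<Longrightarrow> x - y \<in> I"
  using li_add[of I x "-y"] li_lmult[of I y "-1"] by simp

lemma NK_left: "left_ideal (N_kernel a b g)"
  unfolding left_ideal_def N_kernel_def
proof (intro conjI ballI allI)
  show "0 \<in> {i + c * (gen_d - 1) |i c. i \<in> downup_ideal a b g}"
    using tsi_0[OF tsi_downup] by (metis (mono_tags, lifting) add.right_neutral mem_Collect_eq mult_zero_left)
next
  fix x y assume "x \<in> {i + c * (gen_d - 1) |i c. i \<in> downup_ideal a b g}"
    "y \<in> {i + c * (gen_d - 1) |i c. i \<in> downup_ideal a b g}"
  then obtain i1 c1 i2 c2 where "x = i1 + c1 * (gen_d - 1)" "i1 \<in> downup_ideal a b g"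
     "y = i2 + c2 * (gen_d - 1)" "i2 \<in> downup_ideal a b g" by blast
  then show "x + y \<in> {i + c * (gen_d - 1) |i c. i \<in> downup_ideal a b g}"
  proof -
    have "x + y = (i1+i2) + (c1+c2)*(gen_d-1)" by (subst \<open>x = _\<close>, subst \<open>y = _\<close>) (simp add: algebra_simps)
    then show ?thesis using tsi_add[OF tsi_downup \<open>i1 \<in> _\<close> \<open>i2 \<in> _\<close>] by blast
  qed
next
  fix x d assume "x \<in> {i + c * (gen_d - 1) |i c. i \<in> downup_ideal a b g}"
  then obtain i1 c1 where "x = i1 + c1 * (gen_d - 1)" "i1 \<in> downup_ideal a b g" by blast
  then show "d * x \<in> {i + c * (gen_d - 1) |i c. i \<in> downup_ideal a b g}"
  proof -
    have "d * x = d*i1 + (d*c1)*(gen_d-1)" by (subst \<open>x = _\<close>) (simp add: algebra_simps)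
    then show ?thesis using tsi_lmult[OF tsi_downup \<open>i1 \<in> _\<close>] by blast
  qed
qed

lemma J_NK: "x \<in> downup_ideal a b g \<Longrightarrow> x \<in> N_kernel a b g"
  unfolding N_kernel_def by (metis (mono_tags, lifting) add.right_neutral mem_Collect_eq mult_zero_left)

lemma XD_NK: "x * gen_d - x \<in> N_kernel a b g"
  unfolding N_kernel_def using tsi_0[OF tsi_downup]
  by (intro CollectI exI[of _ 0] exI[of _ x]) (auto simp: algebra_simps)

definition wel :: "'k::field \<Rightarrow> 'k free2" where
  "wel \<eta> = - (gen_u * gen_d) + gen_d * gen_u + scal (inverse (\<eta> - 1))"

definition acoef :: "'k::field \<Rightarrow> nat \<Rightarrow> 'k" where
  "acoef \<eta> i = inverse (\<eta> - 1) * (\<eta>^i - 1)"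
definition bcoef :: "'k::field \<Rightarrow> nat \<Rightarrow> 'k" where
  "bcoef \<eta> i = inverse (\<eta> - 1) * of_nat i"

definition rep :: "'k::field \<Rightarrow> nat \<Rightarrow> (nat \<Rightarrow> nat \<Rightarrow> 'k) \<Rightarrow> 'k free2" where
  "rep \<eta> n c = (\<Sum>i<n. \<Sum>j<n. scal (c i j) * (gen_u ^ i * wel \<eta> ^ j))"

definition bnd :: "nat \<Rightarrow> (nat \<Rightarrow> nat \<Rightarrow> 'k::zero) \<Rightarrow> bool" where
  "bnd n c \<longleftrightarrow> (\<forall>i j. n \<le> i \<or> n \<le> j \<longrightarrow> c i j = 0)"

definition Dop :: "'k::field \<Rightarrow> (nat \<Rightarrow> nat \<Rightarrow> 'k) \<Rightarrow> nat \<Rightarrow> nat \<Rightarrow> 'k" where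
  "Dop \<eta> c i j = \<eta>^j * c i j + (if j = 0 then 0 else acoef \<eta> (Suc i) * c (Suc i) (j - 1))
      - bcoef \<eta> (Suc i) * c (Suc i) j"

lemma li_sum: "left_ideal I \<Longrightarrow> (\<And>x. x \<in> S \<Longrightarrow> f x \<in> I) \<Longrightarrow> sum f S \<in> I"
proof (induction S rule: infinite_finite_induct)
  case (infinite A) then show ?case by (simp add: li_0)
next
  case empty then show ?case by (simp add: li_0)
next
  case (insert x F) then show ?case by (simp add: li_add)
qed

lemma bnd_mono: "bnd n c \<Longrightarrow> n \<le> m \<Longrightarrow> bnd m c"
  unfolding bnd_def by auto

lemma rep_mono: assumes "bnd n c" "n \<le> m" shows "rep \<eta> m c = rep \<eta> n c"
proof -
  have z: "c i j = 0" if "n \<le> i \<or> n \<le> j" for i j using assms(1) that unfolding bnd_def by blast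
  have "rep \<eta> m c = (\<Sum>i<n. \<Sum>j<m. scal (c i j) * (gen_u ^ i * wel \<eta> ^ j))"
    unfolding rep_def by (rule sum.mono_neutral_right) (use assms(2) z in auto)
  also have "\<dots> = rep \<eta> n c"
    unfolding rep_def by (rule sum.cong[OF refl], rule sum.mono_neutral_right) (use assms(2) z in auto)
  finally show ?thesis .
qed

lemma rep_add: "rep \<eta> n (\<lambda>i j. c i j + d i j) = rep \<eta> n c + rep \<eta> n d"
  unfolding rep_def by (simp add: scal_add distrib_right sum.distrib)
lemma rep_diff: "rep \<eta> n (\<lambda>i j. c i j - d i j) = rep \<eta> n c - rep \<eta> n d"
  unfolding rep_def by (simp add: scal_diff left_diff_distrib sum_subtractf)
lemma rep_scal: "rep \<eta> n (\<lambda>i j. k * c i j) = scal k * rep \<eta> n c"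
  unfolding rep_def by (simp add: sum_distrib_left scal_mult[symmetric] mult.assoc)

lemma shift2:
  assumes "bnd n c"
  shows "(\<Sum>i<Suc n. \<Sum>j<Suc n. scal (if j = 0 then 0 else acoef \<eta> (Suc i) * c (Suc i) (j - 1)) * (gen_u^i * wel \<eta>^j))
     = (\<Sum>i<n. \<Sum>j<n. scal (acoef \<eta> i * c i j) * (gen_u^(i-1) * wel \<eta>^Suc j))"
proof -
  define g where "g i = (\<Sum>j<n. scal (acoef \<eta> i * c i j) * (gen_u^(i-1) * wel \<eta>^Suc j))" for i
  have z: "c i j = 0" if "n \<le> i" for i j using assms that unfolding bnd_def by blast
  have "(\<Sum>i<Suc n. \<Sum>j<Suc n. scal (if j = 0 then 0 else acoef \<eta> (Suc i) * c (Suc i) (j - 1)) * (gen_u^i * wel \<eta>^j))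
      = (\<Sum>i<Suc n. g (Suc i))"
    unfolding g_def by (rule sum.cong[OF refl]) (simp add: sum.lessThan_Suc_shift del: sum.lessThan_Suc)
  also have "\<dots> = (\<Sum>i<Suc (Suc n). g i) - g 0"
    by (simp add: sum.lessThan_Suc_shift del: sum.lessThan_Suc)
  also have "g 0 = 0" unfolding g_def by (simp add: acoef_def)
  also have "(\<Sum>i<Suc (Suc n). g i) = (\<Sum>i<n. g i)"
    using z by (simp add: g_def)
  finally show ?thesis by (simp add: g_def)
qed

lemma shift3:
  assumes "bnd n c"
  shows "(\<Sum>i<Suc n. \<Sum>j<Suc n. scal (bcoef \<eta> (Suc i) * c (Suc i) j) * (gen_u^i * wel \<eta>^j))
     = (\<Sum>i<n. \<Sum>j<n. scal (bcoef \<eta> i * c i j) * (gen_u^(i-1) * wel \<eta>^j))"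
proof -
  define g where "g i = (\<Sum>j<n. scal (bcoef \<eta> i * c i j) * (gen_u^(i-1) * wel \<eta>^j))" for i
  have z: "c i j = 0" if "n \<le> i \<or> n \<le> j" for i j using assms that unfolding bnd_def by blast
  have "(\<Sum>i<Suc n. \<Sum>j<Suc n. scal (bcoef \<eta> (Suc i) * c (Suc i) j) * (gen_u^i * wel \<eta>^j))
      = (\<Sum>i<Suc n. g (Suc i))"
    unfolding g_def by (rule sum.cong[OF refl]) (use z in simp)
  also have "\<dots> = (\<Sum>i<Suc (Suc n). g i) - g 0"
    by (simp add: sum.lessThan_Suc_shift del: sum.lessThan_Suc)
  also have "g 0 = 0" unfolding g_def by (simp add: bcoef_def)
  also have "(\<Sum>i<Suc (Suc n). g i) = (\<Sum>i<n. g i)"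
    using z by (simp add: g_def)
  finally show ?thesis by (simp add: g_def)
qed

definition Top :: "nat \<Rightarrow> (nat \<Rightarrow> nat \<Rightarrow> 'k::zero) \<Rightarrow> bool" where
  "Top I c \<longleftrightarrow> (\<forall>i>I. \<forall>j. c i j = 0)"

lemma Dop_bnd: "bnd n c \<Longrightarrow> bnd (Suc n) (Dop \<eta> c)"
  unfolding bnd_def Dop_def by auto

lemma U_rep: assumes "bnd n c"
  shows "gen_u * rep \<eta> n c = rep \<eta> (Suc n) (\<lambda>i j. if i = 0 then 0 else c (i - 1) j)"
proof -
  have z: "c i j = 0" if "n \<le> i \<or> n \<le> j" for i j using assms that unfolding bnd_def by blast
  have "rep \<eta> (Suc n) (\<lambda>i j. if i = 0 then 0 else c (i - 1) j)
     = (\<Sum>i<n. \<Sum>j<Suc n. scal (c i j) * (gen_u^Suc i * wel \<eta>^j))"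
    unfolding rep_def by (simp add: sum.lessThan_Suc_shift del: sum.lessThan_Suc)
  also have "\<dots> = (\<Sum>i<n. \<Sum>j<n. scal (c i j) * (gen_u^Suc i * wel \<eta>^j))"
    using z by simp
  also have "\<dots> = gen_u * rep \<eta> n c"
    unfolding rep_def by (simp add: sum_distrib_left scal_comm2 mult.assoc)
  finally show ?thesis by simp
qed

lemma word_cons: "Poly_Mapping.single (Abs_word (a # l)) k = Poly_Mapping.single (Abs_word [a]) 1 * Poly_Mapping.single (Abs_word l) (k::'k::ring_1)"
proof -
  have "Abs_word [a] + Abs_word l = Abs_word (a # l)"
    by (simp add: plus_word_def Abs_word_inverse)
  then show ?thesis by (simp add: mult_single)
qed

lemma word_nil: "Poly_Mapping.single (Abs_word []) k = (scal k :: 'k::ring_1 free2)"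
  by (simp add: scal_def zero_word_def)

context
  fixes \<eta> :: "'k::field_char_0"
  assumes eta_nz: "\<eta> \<noteq> 0"
    and eta_nroot: "\<forall>n::nat. n > 0 \<longrightarrow> \<eta> ^ n \<noteq> 1"
begin

abbreviation "JJ \<equiv> downup_ideal (1 + \<eta>) (- \<eta>) (1::'k)"
abbreviation "NK \<equiv> N_kernel (1 + \<eta>) (- \<eta>) (1::'k)"
abbreviation "eps \<equiv> inverse (\<eta> - 1)"
abbreviation "DD \<equiv> (gen_d :: 'k free2)"
abbreviation "UU \<equiv> (gen_u :: 'k free2)"
abbreviation "WW \<equiv> wel \<eta>"

lemma eta_ne1: "\<eta> \<noteq> 1" using eta_nroot[rule_format, of 1] by simp
lemma eta_eps: "\<eta> * eps = 1 + eps"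
  using eta_ne1 by (simp add: field_simps)
lemma eps_nz: "eps \<noteq> 0" using eta_ne1 by simp

lemma JJ_tsi: "two_sided_ideal JJ" by (rule tsi_downup)

lemma R1: "DD * DD * UU - scal (1 + \<eta>) * (DD * UU * DD) - scal (- \<eta>) * (UU * DD * DD) - scal 1 * DD \<in> JJ"
  using rels_in unfolding downup_rels_def by blast
lemma R2: "DD * UU * UU - scal (1 + \<eta>) * (UU * DD * UU) - scal (- \<eta>) * (UU * UU * DD) - scal 1 * UU \<in> JJ"
  using rels_in unfolding downup_rels_def by blast

lemma Dscal: "DD * scal c = scal c * DD" "DD * (scal c * y) = scal c * (DD * y)"
  "UU * scal c = scal c * UU" "UU * (scal c * y) = scal c * (UU * y)"
  by (simp_all add: scal_comm scal_comm2)

lemmas scal_simps = scal_add scal_diff scal_minus scal_mult2 scal_mult Dscal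

lemma DW: "DD * WW - scal \<eta> * (WW * DD) \<in> JJ"
proof -
  have "DD * WW - scal \<eta> * (WW * DD) = DD * DD * UU - scal (1 + \<eta>) * (DD * UU * DD) - scal (- \<eta>) * (UU * DD * DD) - scal 1 * DD"
    by (simp add: wel_def algebra_simps scal_simps eta_eps)
  then show ?thesis using R1 by simp
qed

lemma WU: "WW * UU - scal \<eta> * (UU * WW) \<in> JJ"
proof -
  have "WW * UU - scal \<eta> * (UU * WW) = DD * UU * UU - scal (1 + \<eta>) * (UU * DD * UU) - scal (- \<eta>) * (UU * UU * DD) - scal 1 * UU"
    by (simp add: wel_def algebra_simps scal_simps eta_eps)
  then show ?thesis using R2 by simp
qed

lemma Wscal: "WW * scal c = scal c * WW" "WW * (scal c * y) = scal c * (WW * y)"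
  "WW^j * scal c = scal c * WW^j" "WW^j * (scal c * y) = scal c * (WW^j * y)"
  "UU^j * scal c = scal c * UU^j" "UU^j * (scal c * y) = scal c * (UU^j * y)"
  by (simp_all add: scal_comm scal_comm2)

lemmas sc = scal_mult2 scal_mult Dscal Wscal

lemma DWj: "DD * WW^j - scal (\<eta>^j) * (WW^j * DD) \<in> JJ"
proof (induction j)
  case 0 then show ?case using tsi_0[OF JJ_tsi] by simp
next
  case (Suc j)
  have "DD * WW^Suc j - scal (\<eta>^Suc j) * (WW^Suc j * DD) =
     (DD * WW^j - scal (\<eta>^j) * (WW^j * DD)) * WW + scal (\<eta>^j) * (WW^j * (DD * WW - scal \<eta> * (WW * DD)))"
    unfolding power_Suc2 by (simp add: algebra_simps sc mult.commute del: power_Suc)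
  then show ?case using Suc DW tsi_add[OF JJ_tsi] tsi_lmult[OF JJ_tsi] tsi_rmult[OF JJ_tsi] by metis
qed

lemma WUi: "WW * UU^i - scal (\<eta>^i) * (UU^i * WW) \<in> JJ"
proof (induction i)
  case 0 then show ?case using tsi_0[OF JJ_tsi] by simp
next
  case (Suc i)
  have "WW * UU^Suc i - scal (\<eta>^Suc i) * (UU^Suc i * WW) =
     (WW * UU^i - scal (\<eta>^i) * (UU^i * WW)) * UU + scal (\<eta>^i) * (UU^i * (WW * UU - scal \<eta> * (UU * WW)))"
    unfolding power_Suc2 by (simp add: algebra_simps sc mult.commute del: power_Suc)
  then show ?case using Suc WU tsi_add[OF JJ_tsi] tsi_lmult[OF JJ_tsi] tsi_rmult[OF JJ_tsi] by metis
qed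

lemma DUi_Suc: "DD * UU^Suc i - (UU^Suc i * DD + UU^i * (scal (acoef \<eta> (Suc i)) * WW - scal (bcoef \<eta> (Suc i)))) \<in> JJ"
proof (induction i)
  case 0
  have "acoef \<eta> 1 = 1" "bcoef \<eta> 1 = eps" using eta_ne1 by (auto simp: acoef_def bcoef_def)
  then show ?case using tsi_0[OF JJ_tsi] by (simp add: wel_def)
next
  case (Suc i)
  have e1: "scal (acoef \<eta> (Suc (Suc i))) = scal (acoef \<eta> (Suc i)) + (scal (\<eta>^Suc i) :: 'k free2)"
    unfolding scal_add[symmetric] acoef_def using eta_ne1
    by (simp add: field_simps) 
  have e2: "scal (bcoef \<eta> (Suc (Suc i))) = scal (bcoef \<eta> (Suc i)) + (scal eps :: 'k free2)"
    unfolding scal_add[symmetric] bcoef_def using eta_ne1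
    by (simp add: field_simps)
  have "DD * UU^Suc (Suc i) - (UU^Suc (Suc i) * DD + UU^Suc i * (scal (acoef \<eta> (Suc (Suc i))) * WW - scal (bcoef \<eta> (Suc (Suc i)))))
     = UU * (DD * UU^Suc i - (UU^Suc i * DD + UU^i * (scal (acoef \<eta> (Suc i)) * WW - scal (bcoef \<eta> (Suc i)))))
       + (WW * UU^Suc i - scal (\<eta>^Suc i) * (UU^Suc i * WW))"
    unfolding e1 e2 by (simp add: wel_def algebra_simps sc del: power_Suc) (simp add: algebra_simps sc)
  then show ?case using Suc WUi tsi_add[OF JJ_tsi] tsi_lmult[OF JJ_tsi] by metis
qed

lemma DUi: "DD * UU^i - (UU^i * DD + UU^(i-1) * (scal (acoef \<eta> i) * WW - scal (bcoef \<eta> i))) \<in> JJ"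
proof (cases i)
  case 0 then show ?thesis using tsi_0[OF JJ_tsi] by (simp add: acoef_def bcoef_def)
next
  case (Suc k) then show ?thesis using DUi_Suc[of k] by simp
qed

lemma DUW: "DD * (UU^i * WW^j) - (scal (\<eta>^j) * (UU^i * WW^j) + scal (acoef \<eta> i) * (UU^(i-1) * WW^Suc j)
   - scal (bcoef \<eta> i) * (UU^(i-1) * WW^j)) \<in> NK"
proof -
  have "DD * (UU^i * WW^j) - (scal (\<eta>^j) * (UU^i * WW^j) + scal (acoef \<eta> i) * (UU^(i-1) * WW^Suc j)
   - scal (bcoef \<eta> i) * (UU^(i-1) * WW^j)) =
    (DD * UU^i - (UU^i * DD + UU^(i-1) * (scal (acoef \<eta> i) * WW - scal (bcoef \<eta> i)))) * WW^j
    + UU^i * (DD * WW^j - scal (\<eta>^j) * (WW^j * DD))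
    + scal (\<eta>^j) * ((UU^i * WW^j) * DD - UU^i * WW^j)"
    by (simp add: algebra_simps sc del: power_Suc) (simp add: mult.assoc power_commutes)
  moreover have "(DD * UU^i - (UU^i * DD + UU^(i-1) * (scal (acoef \<eta> i) * WW - scal (bcoef \<eta> i)))) * WW^j \<in> NK"
    by (rule J_NK, rule tsi_rmult[OF JJ_tsi DUi])
  moreover have "UU^i * (DD * WW^j - scal (\<eta>^j) * (WW^j * DD)) \<in> NK"
    by (rule J_NK, rule tsi_lmult[OF JJ_tsi DWj])
  moreover have "scal (\<eta>^j) * ((UU^i * WW^j) * DD - UU^i * WW^j) \<in> NK"
    by (rule li_lmult[OF NK_left XD_NK])
  ultimately show ?thesis using li_add[OF NK_left] by metis
qed

lemma D_rep: assumes "bnd n c" shows "DD * rep \<eta> n c - rep \<eta> (Suc n) (Dop \<eta> c) \<in> NK"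
proof -
  define T where "T i j = scal (\<eta>^j) * (UU^i * WW^j) + scal (acoef \<eta> i) * (UU^(i-1) * WW^Suc j)
   - scal (bcoef \<eta> i) * (UU^(i-1) * WW^j)" for i j
  have "DD * rep \<eta> n c - (\<Sum>i<n. \<Sum>j<n. scal (c i j) * T i j)
     = (\<Sum>i<n. \<Sum>j<n. scal (c i j) * (DD * (UU^i * WW^j) - T i j))"
    unfolding rep_def by (simp add: sum_distrib_left sum_subtractf right_diff_distrib sc mult.assoc)
  also have "\<dots> \<in> NK"
    by (intro li_sum[OF NK_left] li_lmult[OF NK_left]) (use DUW in \<open>simp add: T_def\<close>)
  finally have 1: "DD * rep \<eta> n c - (\<Sum>i<n. \<Sum>j<n. scal (c i j) * T i j) \<in> NK" .
  have 2: "(\<Sum>i<n. \<Sum>j<n. scal (c i j) * T i j) =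
     rep \<eta> n (\<lambda>i j. \<eta>^j * c i j)
     + (\<Sum>i<n. \<Sum>j<n. scal (acoef \<eta> i * c i j) * (gen_u^(i-1) * wel \<eta>^Suc j))
     - (\<Sum>i<n. \<Sum>j<n. scal (bcoef \<eta> i * c i j) * (gen_u^(i-1) * wel \<eta>^j))"
    unfolding rep_def T_def
    by (simp add: distrib_left right_diff_distrib sum.distrib sum_subtractf scal_mult2 mult.commute del: power_Suc)
  have 3: "rep \<eta> (Suc n) (Dop \<eta> c) = rep \<eta> (Suc n) (\<lambda>i j. \<eta>^j * c i j)
     + rep \<eta> (Suc n) (\<lambda>i j. if j = 0 then 0 else acoef \<eta> (Suc i) * c (Suc i) (j - 1))
     - rep \<eta> (Suc n) (\<lambda>i j. bcoef \<eta> (Suc i) * c (Suc i) j)"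
    unfolding Dop_def by (simp add: rep_add rep_diff)
  have b1: "bnd n (\<lambda>i j. \<eta>^j * c i j)" using assms unfolding bnd_def by auto
  have 4: "rep \<eta> (Suc n) (Dop \<eta> c) = (\<Sum>i<n. \<Sum>j<n. scal (c i j) * T i j)"
    unfolding 3 2 rep_mono[OF b1, of "Suc n", simplified] unfolding rep_def shift2[OF assms] shift3[OF assms] by (rule refl)
  show ?thesis using 1 unfolding 4 .
qed

definition Sp :: "'k free2 \<Rightarrow> bool" where
  "Sp x \<longleftrightarrow> (\<exists>n c. bnd n c \<and> x - rep \<eta> n c \<in> NK)"

lemma Sp_add: assumes "Sp x" "Sp y" shows "Sp (x + y)"
proof -
  obtain n1 c1 n2 c2 where h: "bnd n1 c1" "x - rep \<eta> n1 c1 \<in> NK" "bnd n2 c2" "y - rep \<eta> n2 c2 \<in> NK"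
    using assms unfolding Sp_def by blast
  define m where "m = max n1 n2"
  have b: "bnd m c1" "bnd m c2" using bnd_mono[OF h(1)] bnd_mono[OF h(3)] m_def by auto
  have "bnd m (\<lambda>i j. c1 i j + c2 i j)" using b unfolding bnd_def by auto
  moreover have "x + y - rep \<eta> m (\<lambda>i j. c1 i j + c2 i j) = (x - rep \<eta> n1 c1) + (y - rep \<eta> n2 c2)"
  proof -
    have r1: "rep \<eta> m c1 = rep \<eta> n1 c1" by (rule rep_mono[OF h(1)]) (simp add: m_def)
    have r2: "rep \<eta> m c2 = rep \<eta> n2 c2" by (rule rep_mono[OF h(3)]) (simp add: m_def)
    show ?thesis unfolding rep_add r1 r2 by simp
  qed
  ultimately show ?thesis unfolding Sp_def using h li_add[OF NK_left] by metis
qed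

lemma Sp_scal: assumes "Sp x" shows "Sp (scal k * x)"
proof -
  obtain n c where h: "bnd n c" "x - rep \<eta> n c \<in> NK" using assms unfolding Sp_def by blast
  have "bnd n (\<lambda>i j. k * c i j)" using h unfolding bnd_def by auto
  moreover have "scal k * x - rep \<eta> n (\<lambda>i j. k * c i j) = scal k * (x - rep \<eta> n c)"
    unfolding rep_scal by (simp add: right_diff_distrib)
  ultimately show ?thesis unfolding Sp_def using h li_lmult[OF NK_left] by metis
qed

lemma Sp_D: assumes "Sp x" shows "Sp (DD * x)"
proof -
  obtain n c where h: "bnd n c" "x - rep \<eta> n c \<in> NK" using assms unfolding Sp_def by blast
  have eq: "DD * x - rep \<eta> (Suc n) (Dop \<eta> c) = DD * (x - rep \<eta> n c) + (DD * rep \<eta> n c - rep \<eta> (Suc n) (Dop \<eta> c))"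
    by (simp add: algebra_simps)
  have "DD * x - rep \<eta> (Suc n) (Dop \<eta> c) \<in> NK"
    unfolding eq by (rule li_add[OF NK_left li_lmult[OF NK_left h(2)] D_rep[OF h(1)]])
  then show ?thesis unfolding Sp_def using Dop_bnd[OF h(1)] by blast
qed

lemma Sp_U: assumes "Sp x" shows "Sp (UU * x)"
proof -
  obtain n c where h: "bnd n c" "x - rep \<eta> n c \<in> NK" using assms unfolding Sp_def by blast
  have b: "bnd (Suc n) (\<lambda>i j. if i = 0 then 0 else c (i - 1) j)" using h unfolding bnd_def by auto
  have eq: "UU * x - rep \<eta> (Suc n) (\<lambda>i j. if i = 0 then 0 else c (i - 1) j) = UU * (x - rep \<eta> n c)"
    unfolding U_rep[OF h(1), symmetric] by (simp add: right_diff_distrib)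
  have "UU * x - rep \<eta> (Suc n) (\<lambda>i j. if i = 0 then 0 else c (i - 1) j) \<in> NK"
    unfolding eq by (rule li_lmult[OF NK_left h(2)])
  then show ?thesis unfolding Sp_def using b by blast
qed

lemma Sp_1: "Sp 1"
proof -
  have b: "bnd 1 (\<lambda>i j. if i = 0 \<and> j = 0 then 1 else (0::'k))" unfolding bnd_def by auto
  have eq: "rep \<eta> 1 (\<lambda>i j. if i = 0 \<and> j = 0 then 1 else (0::'k)) = 1" unfolding rep_def by simp
  have "1 - rep \<eta> 1 (\<lambda>i j. if i = 0 \<and> j = 0 then 1 else (0::'k)) \<in> NK" unfolding eq using li_0[OF NK_left] by simp
  then show ?thesis unfolding Sp_def using b by blast
qed

lemma Sp_single: "Sp (Poly_Mapping.single (Abs_word l) k)"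
proof (induction l)
  case Nil then show ?case using Sp_scal[OF Sp_1, of k] by (simp add: word_nil)
next
  case (Cons a l)
  show ?case
  proof (cases a)
    case LD then show ?thesis using Sp_D[OF Cons] word_cons[of LD l k] by (simp add: gen_d_def)
  next
    case LU then show ?thesis using Sp_U[OF Cons] word_cons[of LU l k] by (simp add: gen_u_def)
  qed
qed

lemma Sp_all: "Sp x"
proof (induction x rule: update_induct)
  case const
  have "Sp (0::'k free2)" using Sp_scal[OF Sp_1, of 0] by simp
  then show ?case .
next
  case (update f a b)
  have "Sp (Poly_Mapping.single a b)" using Sp_single[of "Rep_word a" b] by (simp add: Rep_word_inverse)
  then show ?case using update by (simp add: update_eq_add Sp_add)
qed


definition Tk :: "nat \<Rightarrow> (nat \<Rightarrow> nat \<Rightarrow> 'k) \<Rightarrow> nat \<Rightarrow> nat \<Rightarrow> 'k" where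
  "Tk k c i j = Dop \<eta> c i j - \<eta>^k * c i j"

definition G :: "nat \<Rightarrow> (nat \<Rightarrow> nat \<Rightarrow> 'k) \<Rightarrow> bool" where
  "G n c \<longleftrightarrow> (\<exists>a m. a * rep \<eta> n c - WW^m \<in> NK)"

lemma eta_inj: assumes "\<eta>^j = \<eta>^k" shows "j = k"
proof (rule ccontr)
  assume "j \<noteq> k"
  then consider "j < k" | "k < j" by linarith
  then show False
  proof cases
    case 1
    then have "\<eta>^k = \<eta>^j * \<eta>^(k - j)" by (simp add: power_add[symmetric])
    then have "\<eta>^(k-j) = 1" using assms eta_nz by simp
    then show False using eta_nroot 1 by simp
  next
    case 2
    then have "\<eta>^j = \<eta>^k * \<eta>^(j - k)" by (simp add: power_add[symmetric])
    then have "\<eta>^(j-k) = 1" using assms eta_nz by simp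
    then show False using eta_nroot 2 by simp
  qed
qed

lemma Tk_bnd: assumes "bnd n c" shows "bnd (Suc n) (Tk k c)"
proof -
  have "bnd (Suc n) (Dop \<eta> c)" by (rule Dop_bnd[OF assms])
  moreover have "bnd (Suc n) c" by (rule bnd_mono[OF assms]) simp
  ultimately show ?thesis unfolding bnd_def Tk_def by simp
qed

lemma Tk_rep: assumes "bnd n c"
  shows "(DD - scal (\<eta>^k)) * rep \<eta> n c - rep \<eta> (Suc n) (Tk k c) \<in> NK"
proof -
  have r: "rep \<eta> (Suc n) c = rep \<eta> n c" by (rule rep_mono[OF assms]) simp
  have "rep \<eta> (Suc n) (Tk k c) = rep \<eta> (Suc n) (Dop \<eta> c) - scal (\<eta>^k) * rep \<eta> n c"
    unfolding Tk_def rep_diff[of \<eta> "Suc n" "Dop \<eta> c" "\<lambda>i j. \<eta>^k * c i j", simplified] rep_scal r ..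
  then have "(DD - scal (\<eta>^k)) * rep \<eta> n c - rep \<eta> (Suc n) (Tk k c) = DD * rep \<eta> n c - rep \<eta> (Suc n) (Dop \<eta> c)"
    by (simp add: algebra_simps)
  then show ?thesis using D_rep[OF assms] by simp
qed

lemma Tk_above: "Top I c \<Longrightarrow> Top I (Tk k c)"
  unfolding Top_def Tk_def Dop_def by auto

lemma Tk_row: "Top I c \<Longrightarrow> Tk k c I j = (\<eta>^j - \<eta>^k) * c I j"
  unfolding Top_def Tk_def Dop_def by (simp add: algebra_simps)

lemma Tk_below: assumes "Top (Suc I) c" "\<forall>j. c (Suc I) j \<noteq> 0 \<longrightarrow> j = j0"
  shows "Tk j0 c I j0 = - bcoef \<eta> (Suc I) * c (Suc I) j0"
proof -
  have "j0 \<noteq> 0 \<Longrightarrow> c (Suc I) (j0 - 1) = 0" using assms(2) by (metis diff_less less_not_refl not_gr0 zero_less_one)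
  then show ?thesis unfolding Tk_def Dop_def by auto
qed

lemma bcoef_nz: "I > 0 \<Longrightarrow> bcoef \<eta> I \<noteq> 0"
  unfolding bcoef_def using eps_nz by simp

lemma G_lift: assumes "bnd n c" "G (Suc n) (Tk k c)" shows "G n c"
proof -
  obtain a m where h: "a * rep \<eta> (Suc n) (Tk k c) - WW^m \<in> NK" using assms(2) unfolding G_def by blast
  have eq: "(a * (DD - scal (\<eta>^k))) * rep \<eta> n c - WW^m =
      a * ((DD - scal (\<eta>^k)) * rep \<eta> n c - rep \<eta> (Suc n) (Tk k c)) + (a * rep \<eta> (Suc n) (Tk k c) - WW^m)"
    by (simp add: algebra_simps)
  have "(a * (DD - scal (\<eta>^k))) * rep \<eta> n c - WW^m \<in> NK"
    unfolding eq by (rule li_add[OF NK_left li_lmult[OF NK_left Tk_rep[OF assms(1)]] h])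
  then show ?thesis unfolding G_def by blast
qed

lemma row_finite: "bnd n c \<Longrightarrow> finite {j. c I j \<noteq> 0}"
  by (rule finite_subset[of _ "{..<n}"]) (auto simp: bnd_def not_le[symmetric])

lemma inner:
  assumes H: "\<And>n c j0. bnd n c \<Longrightarrow> Top I c \<Longrightarrow> {j. c I j \<noteq> 0} = {j0} \<Longrightarrow> G n c"
  shows "bnd n c \<Longrightarrow> Top I c \<Longrightarrow> c I j \<noteq> 0 \<Longrightarrow> G n c"
proof (induction "card {j. c I j \<noteq> 0}" arbitrary: n c j rule: less_induct)
  case less
  define S where "S = {j. c I j \<noteq> 0}"
  have fin: "finite S" unfolding S_def by (rule row_finite[OF less.prems(1)])
  have jS: "j \<in> S" unfolding S_def using less.prems(3) by simp
  show ?case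
  proof (cases "S = {j}")
    case True then show ?thesis using H[OF less.prems(1,2)] S_def by blast
  next
    case False
    then obtain j1 where j1: "j1 \<in> S" "j1 \<noteq> j" using jS by blast
    define c' where "c' = Tk j1 c"
    have row: "c' I x = (\<eta>^x - \<eta>^j1) * c I x" for x unfolding c'_def by (rule Tk_row[OF less.prems(2)])
    have S': "{x. c' I x \<noteq> 0} = S - {j1}"
      unfolding row S_def using eta_inj by auto
    have "card (S - {j1}) < card S" using fin j1(1) by (meson card_Diff1_less)
    moreover have "c' I j \<noteq> 0" using S' jS j1 by auto
    ultimately have "G (Suc n) c'"
      using less.hyps[of c' "Suc n" j] S' S_def Tk_bnd[OF less.prems(1)] Tk_above[OF less.prems(2)] c'_def
      by simp
    then show ?thesis using G_lift[OF less.prems(1)] c'_def by simp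
  qed
qed

lemma sum_single_nz: "finite S \<Longrightarrow> a \<in> S \<Longrightarrow> (\<And>x. x \<in> S \<Longrightarrow> x \<noteq> a \<Longrightarrow> f x = 0) \<Longrightarrow> sum f S = f a"
  by (simp add: sum.remove[of S a] sum.neutral)

lemma base0: assumes "bnd n c" "Top 0 c" "{j. c 0 j \<noteq> 0} = {j0}" shows "G n c"
proof -
  have cz: "c i j = 0" if "\<not> (i = 0 \<and> j = j0)" for i j
  proof (cases "i = 0")
    case True
    then have "j \<noteq> j0" using that by simp
    then have "j \<notin> {j. c 0 j \<noteq> 0}" using assms(3) by simp
    then show ?thesis using True by simp
  next
    case False then show ?thesis using assms(2) unfolding Top_def by simp
  qed
  have nz: "c 0 j0 \<noteq> 0" using assms(3) by auto
  have lt: "j0 < n" "0 < n" using assms(1) nz unfolding bnd_def by (meson not_le)+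
  have inner0: "(\<Sum>j<n. scal (c 0 j) * (UU^0 * WW^j)) = scal (c 0 j0) * (UU^0 * WW^j0)"
    by (rule sum_single_nz) (use lt cz in auto)
  have "rep \<eta> n c = (\<Sum>j<n. scal (c 0 j) * (UU^0 * WW^j))"
    unfolding rep_def by (rule sum_single_nz) (use lt cz in auto)
  also have "\<dots> = scal (c 0 j0) * WW^j0" unfolding inner0 by simp
  finally have r: "rep \<eta> n c = scal (c 0 j0) * WW^j0" .
  have "scal (inverse (c 0 j0)) * rep \<eta> n c = WW^j0"
    unfolding r scal_mult2 using nz by simp
  then have "scal (inverse (c 0 j0)) * rep \<eta> n c - WW^j0 \<in> NK" using li_0[OF NK_left] by simp
  then show ?thesis unfolding G_def by blast
qed

lemma descent: "bnd n c \<Longrightarrow> Top I c \<Longrightarrow> c I j \<noteq> 0 \<Longrightarrow> G n c"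
proof (induction I arbitrary: n c j)
  case 0
  show ?case by (rule inner[OF _ 0]) (rule base0)
next
  case (Suc I)
  show ?case
  proof (rule inner[OF _ Suc.prems])
    fix n and c :: "nat \<Rightarrow> nat \<Rightarrow> 'k" and j0 assume b: "bnd n c" and t: "Top (Suc I) c" and s: "{j. c (Suc I) j \<noteq> 0} = {j0}"
    define c' where "c' = Tk j0 c"
    have all: "\<forall>j. c (Suc I) j \<noteq> 0 \<longrightarrow> j = j0" using s by auto
    have "Top I c'"
      unfolding Top_def
    proof (intro allI impI)
      fix i j assume "I < i"
      then consider "i = Suc I" | "Suc I < i" by linarith
      then show "c' i j = 0"
      proof cases
        case 1 then show ?thesis using Tk_row[OF t, of j0 j] all c'_def by auto
      next
        case 2 then show ?thesis using Tk_above[OF t, of j0] c'_def unfolding Top_def by auto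
      qed
    qed
    moreover have "c' I j0 \<noteq> 0"
      using Tk_below[OF t all] bcoef_nz[of "Suc I"] s c'_def by auto
    ultimately have "G (Suc n) c'" using Suc.IH Tk_bnd[OF b] c'_def by blast
    then show "G n c" using G_lift[OF b] c'_def by simp
  qed
qed

end

theorem lemma4p4:
  fixes \<eta> :: "'k::field_char_0"
    and L :: "'k free2 set"
  assumes eta_nz: "\<eta> \<noteq> 0"
    and eta_nroot: "\<forall>n::nat. n > 0 \<longrightarrow> \<eta> ^ n \<noteq> 1"
    and L_left: "left_ideal L"
    and L_sup: "N_kernel (1 + \<eta>) (- \<eta>) 1 \<subseteq> L"
    and L_nonzero: "L \<noteq> N_kernel (1 + \<eta>) (- \<eta>) 1"
  shows "\<exists>m::nat. (- (gen_u * gen_d) + gen_d * gen_u + scal (inverse (\<eta> - 1))) ^ m \<in> L"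
proof -
  obtain f where f: "f \<in> L" "f \<notin> N_kernel (1 + \<eta>) (- \<eta>) 1" using L_sup L_nonzero by blast
  obtain n c where nc: "bnd n c" "f - rep \<eta> n c \<in> N_kernel (1 + \<eta>) (- \<eta>) 1"
    using Sp_all[OF eta_nz eta_nroot, of f] unfolding Sp_def[OF eta_nz eta_nroot] by blast
  have "\<exists>i j. c i j \<noteq> 0"
  proof (rule ccontr)
    assume "\<not> ?thesis"
    then have "rep \<eta> n c = 0" unfolding rep_def by simp
    then show False using nc(2) f(2) by simp
  qed
  then obtain i0 j0 where ij: "c i0 j0 \<noteq> 0" by blast
  define R where "R = {i. \<exists>j. c i j \<noteq> 0}"
  have finR: "finite R" unfolding R_def
    by (rule finite_subset[of _ "{..<n}"]) (use nc(1) in \<open>auto simp: bnd_def not_le[symmetric]\<close>)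
  define I where "I = Max R"
  have "i0 \<in> R" unfolding R_def using ij by blast
  then have "I \<in> R" unfolding I_def using finR Max_in by blast
  then obtain j where cj: "c I j \<noteq> 0" unfolding R_def by blast
  have top: "Top I c" unfolding Top_def
  proof (intro allI impI)
    fix i j' assume "I < i"
    then have "i \<notin> R" using finR I_def Max_ge leD by blast
    then show "c i j' = 0" unfolding R_def by blast
  qed
  obtain a m where am: "a * rep \<eta> n c - wel \<eta> ^ m \<in> N_kernel (1 + \<eta>) (- \<eta>) 1"
    using descent[OF eta_nz eta_nroot nc(1) top cj] unfolding G_def[OF eta_nz eta_nroot] by blast
  have "rep \<eta> n c \<in> L"
    using li_diff[OF L_left f(1) subsetD[OF L_sup nc(2)]] by simp
  then have ar: "a * rep \<eta> n c \<in> L" by (rule li_lmult[OF L_left])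
  have "wel \<eta> ^ m \<in> L"
    using li_diff[OF L_left ar subsetD[OF L_sup am]] by simp
  then show ?thesis unfolding wel_def by blast
qed

end
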